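(* Let $k\geq 4$. For every $0\leq \gamma< 1/2$, every $n$-node graph with maximum degree at most $\sqrt{n}$ that has at least $n^{k/2+\gamma}$ $k$-cycles must contain at least $\frac{1}{2}n^{k/2-1+\gamma}$ simple $\gamma$-dense $(k-2)$-paths.
   Context: In an $n$-node graph, a $(k-2)$-path is a path $u,u_1,\ldots,u_{k-4},w$ on $k-2$ nodes (counting both endpoints); it is simple if its nodes are distinct. A simple $(k-2)$-path is $\gamma$-dense if the number of $k$-cycles (simple cycles on $k$ vertices) that contain it as a subpath is at least $n^{1/2+\gamma}/2$. *)

theory Defs
  imports Complex_Main
begin

definition simple_graph :: "'a set \<Rightarrow> ('a \<Rightarrow> 'a \<Rightarrow> bool) \<Rightarrow> bool" where
  "simple_graph V E \<longleftrightarrow> finite V \<and> (\<forall>u v. E u v \<longrightarrow> u \<in> V \<and> v \<in> V)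
     \<and> (\<forall>u v. E u v \<longrightarrow> E v u) \<and> (\<forall>u. \<not> E u u)"

definition degree :: "'a set \<Rightarrow> ('a \<Rightarrow> 'a \<Rightarrow> bool) \<Rightarrow> 'a \<Rightarrow> nat" where
  "degree V E u = card {v \<in> V. E u v}"

text \<open>The k-cycles of the graph, each represented as a subgraph, i.e. by its set of edges
  (an edge being a 2-element set of vertices).\<close>
definition k_cycles :: "'a set \<Rightarrow> ('a \<Rightarrow> 'a \<Rightarrow> bool) \<Rightarrow> nat \<Rightarrow> 'a set set set" where
  "k_cycles V E k = {C. \<exists>xs. length xs = k \<and> distinct xs \<and> set xs \<subseteq> V
      \<and> (\<forall>i<k. E (xs ! i) (xs ! ((i + 1) mod k)))
      \<and> C = {{xs ! i, xs ! ((i + 1) mod k)} | i. i < k}}"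

definition simple_paths :: "'a set \<Rightarrow> ('a \<Rightarrow> 'a \<Rightarrow> bool) \<Rightarrow> nat \<Rightarrow> 'a list set" where
  "simple_paths V E m = {p. length p = m \<and> distinct p \<and> set p \<subseteq> V
      \<and> (\<forall>i. i + 1 < m \<longrightarrow> E (p ! i) (p ! (i + 1)))}"

definition path_edges :: "'a list \<Rightarrow> 'a set set" where
  "path_edges p = {{p ! i, p ! (i + 1)} | i. i + 1 < length p}"

definition cycles_through :: "'a set \<Rightarrow> ('a \<Rightarrow> 'a \<Rightarrow> bool) \<Rightarrow> nat \<Rightarrow> 'a list \<Rightarrow> nat" where
  "cycles_through V E k p = card {C \<in> k_cycles V E k. path_edges p \<subseteq> C}"

definition dense_path :: "'a set \<Rightarrow> ('a \<Rightarrow> 'a \<Rightarrow> bool) \<Rightarrow> nat \<Rightarrow> real \<Rightarrow> 'a list \<Rightarrow> bool" where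
  "dense_path V E k \<gamma> p \<longleftrightarrow> p \<in> simple_paths V E (k - 2)
      \<and> real (cycles_through V E k p) \<ge> real (card V) powr (1/2 + \<gamma>) / 2"

end

theory Submission
  imports Defs
begin

definition cyc :: "nat \<Rightarrow> 'a list \<Rightarrow> 'a set set" where
  "cyc k xs = {{xs ! i, xs ! ((i + 1) mod k)} | i. i < k}"

lemma cyc_rev_sub:
  assumes "length xs = k" shows "cyc k (rev xs) \<subseteq> cyc k xs"
proof
  fix e assume "e \<in> cyc k (rev xs)"
  then obtain i where i: "i < k" "e = {rev xs ! i, rev xs ! ((i + 1) mod k)}"
    unfolding cyc_def by auto
  show "e \<in> cyc k xs"
  proof (cases "i + 1 < k")
    case True
    then have "e = {xs ! (k - 2 - i), xs ! ((k - 2 - i + 1) mod k)}"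
      using i assms by (auto simp: rev_nth Suc_diff_Suc numeral_2_eq_2)
    then show ?thesis using True unfolding cyc_def by auto
  next
    case False
    then have "i = k - 1" using i by auto
    then have "e = {xs ! (k - 1), xs ! ((k - 1 + 1) mod k)}"
      using i assms by (auto simp: rev_nth)
    then show ?thesis using i unfolding cyc_def by auto
  qed
qed

lemma cyc_rev: "length xs = k \<Longrightarrow> cyc k (rev xs) = cyc k xs"
  using cyc_rev_sub[of xs k] cyc_rev_sub[of "rev xs" k] by auto

lemma cyc_rot_sub:
  assumes "length xs = k" shows "cyc k (rotate r xs) \<subseteq> cyc k xs"
proof
  fix e assume "e \<in> cyc k (rotate r xs)"
  then obtain i where i: "i < k" "e = {rotate r xs ! i, rotate r xs ! ((i + 1) mod k)}"
    unfolding cyc_def by auto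
  have k: "0 < k" using i by auto
  have "e = {xs ! ((r + i) mod k), xs ! (((r + i) mod k + 1) mod k)}"
    using i assms k by (simp add: nth_rotate mod_add_right_eq add.assoc mod_Suc_eq)
  then show "e \<in> cyc k xs" using k unfolding cyc_def by auto
qed

lemma cyc_rot: assumes "length xs = k" shows "cyc k (rotate r xs) = cyc k xs"
proof
  show "cyc k (rotate r xs) \<subseteq> cyc k xs" using cyc_rot_sub assms .
  have "rotate (k - r mod k) (rotate r xs) = rotate (k - r mod k + r) xs" by (simp add: rotate_rotate)
  also have "\<dots> = xs"
  proof (cases "k = 0")
    case True then show ?thesis using assms by simp
  next
    case False
    have "(k - r mod k + r) mod k = 0"
      using False by (metis add.commute mod_add_right_eq mod_less_divisor le_add_diff_inverse2 less_imp_le mod_self neq0_conv)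
    then show ?thesis using assms by simp
  qed
  finally show "cyc k xs \<subseteq> cyc k (rotate r xs)"
    using cyc_rot_sub[of "rotate r xs" k "k - r mod k"] assms by simp
qed

lemma in_cyc: "i < k \<Longrightarrow> {xs ! i, xs ! ((i + 1) mod k)} \<in> cyc k xs"
  unfolding cyc_def by auto

lemma pe_in: "i + 1 < length p \<Longrightarrow> {p ! i, p ! (i + 1)} \<in> path_edges p"
  unfolding path_edges_def by auto

lemma aligned:
  assumes dx: "distinct xs" and lx: "length xs = k" and dp: "distinct p" and lp: "length p = m"
    and mk: "m \<le> k" and m2: "2 \<le> m" and sub: "path_edges p \<subseteq> cyc k xs"
    and p0: "p ! 0 = xs ! 0" and p1: "p ! 1 = xs ! 1"
  shows "take m xs = p"
proof -
  have "\<forall>i. i < m \<longrightarrow> p ! i = xs ! i"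
  proof (intro allI)
    fix i show "i < m \<longrightarrow> p ! i = xs ! i"
    proof (induction i rule: less_induct)
      case (less i)
      show ?case
      proof (cases "i < 2")
        case True then show ?thesis using p0 p1 by (cases i) auto
      next
        case False
        show ?thesis
        proof
          assume im: "i < m"
          have h1: "p ! (i - 1) = xs ! (i - 1)" using less False im by auto
          have h2: "p ! (i - 2) = xs ! (i - 2)" using less False im by auto
          have "{p ! (i - 1), p ! (i - 1 + 1)} \<in> path_edges p" using pe_in[of "i - 1" p] im lp False by simp
          then obtain l where l: "l < k" "{p ! (i - 1), p ! i} = {xs ! l, xs ! ((l + 1) mod k)}"
            using sub False unfolding cyc_def by auto
          show "p ! i = xs ! i"
          proof (cases "p ! (i - 1) = xs ! l")
            case True
            then have "l = i - 1" using h1 dx lx l im mk by (simp add: nth_eq_iff_index_eq)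
            moreover have "p ! i = xs ! ((l + 1) mod k)" using l True
              by (metis doubleton_eq_iff)
            ultimately show ?thesis using False im mk by simp
          next
            case F2: False
            then have a: "p ! (i - 1) = xs ! ((l + 1) mod k)" and b: "p ! i = xs ! l" using l
              by (metis doubleton_eq_iff)+
            have "(l + 1) mod k = i - 1" using a h1 dx lx l im mk
              by (simp add: nth_eq_iff_index_eq)
            then have "l = i - 2"
            proof (cases "l + 1 < k")
              case True then show ?thesis using \<open>(l + 1) mod k = i - 1\<close> False by simp
            next
              case False
              then have "l + 1 = k" using l(1) by simp
              then show ?thesis using \<open>(l + 1) mod k = i - 1\<close> \<open>\<not> i < 2\<close> by simp
            qed
            then have "p ! i = p ! (i - 2)" using b h2 by simp
            then show ?thesis using dp lp im False by (simp add: nth_eq_iff_index_eq)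
          qed
        qed
      qed
    qed
  qed
  then show ?thesis using lp lx mk by (intro nth_equalityI) auto
qed

lemma align:
  assumes dx: "distinct xs" and lx: "length xs = k" and k3: "3 \<le> k" and dp: "distinct p" and lp: "length p = m"
    and mk: "m \<le> k" and m2: "2 \<le> m" and sub: "path_edges p \<subseteq> cyc k xs"
  shows "\<exists>ys. length ys = k \<and> distinct ys \<and> set ys = set xs \<and> cyc k ys = cyc k xs \<and> take m ys = p"
proof -
  have e01: "{p ! 0, p ! 1} \<in> cyc k xs" using pe_in[of 0 p] sub lp m2 by auto
  then obtain l0 where "l0 < k" "{p ! 0, p ! 1} = {xs ! l0, xs ! ((l0 + 1) mod k)}"
    unfolding cyc_def by auto
  then have "p ! 0 \<in> {xs ! l0, xs ! ((l0 + 1) mod k)}" by (metis insertI1)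
  moreover have "(l0 + 1) mod k < k" using \<open>l0 < k\<close> by simp
  ultimately have "p ! 0 \<in> set xs" using lx \<open>l0 < k\<close> by (metis insert_iff nth_mem singletonD)
  then obtain j where j: "j < k" "xs ! j = p ! 0" using lx by (auto simp: in_set_conv_nth)
  define xs1 where "xs1 = rotate j xs"
  have l1: "length xs1 = k" "distinct xs1" "set xs1 = set xs" "cyc k xs1 = cyc k xs"
    using lx dx cyc_rot[OF lx] by (auto simp: xs1_def)
  have x10: "xs1 ! 0 = p ! 0" using j lx k3 by (simp add: xs1_def nth_rotate)
  from e01 l1(4) have "{p ! 0, p ! 1} \<in> cyc k xs1" by simp
  then obtain l where l: "l < k" "{p ! 0, p ! 1} = {xs1 ! l, xs1 ! ((l + 1) mod k)}"
    unfolding cyc_def by blast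
  show ?thesis
  proof (cases "p ! 0 = xs1 ! l")
    case True
    then have "l = 0" using x10 l1 l by (simp add: nth_eq_iff_index_eq)
    then have "{p ! 0, p ! 1} = {xs1 ! 0, xs1 ! 1}" using l k3 by simp
    moreover have "p ! 0 \<noteq> p ! 1" using dp lp m2 by (simp add: nth_eq_iff_index_eq)
    ultimately have "p ! 1 = xs1 ! 1" using x10 by (metis doubleton_eq_iff)
    then have "take m xs1 = p" using aligned[OF l1(2) l1(1) dp lp mk m2 _ x10[symmetric]] sub l1 by simp
    then show ?thesis using l1 by blast
  next
    case False
    then have a: "p ! 0 = xs1 ! ((l + 1) mod k)" and b: "p ! 1 = xs1 ! l" using l
      by (metis doubleton_eq_iff)+
    have "(l + 1) mod k = 0" using a x10 l1 l by (simp add: nth_eq_iff_index_eq)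
    then have "l = k - 1"
    proof (cases "l + 1 < k")
      case True then show ?thesis using \<open>(l + 1) mod k = 0\<close> by simp
    qed (use l(1) in simp)
    define ys where "ys = rotate (k - 1) (rev xs1)"
    have l2: "length ys = k" "distinct ys" "set ys = set xs" "cyc k ys = cyc k xs"
      using l1 cyc_rot[of "rev xs1" k] cyc_rev[of xs1 k] by (auto simp: ys_def)
    have "ys ! 0 = xs1 ! 0" using l1 k3 by (simp add: ys_def nth_rotate rev_nth)
    moreover have "ys ! 1 = xs1 ! (k - 1)" using l1 k3 by (simp add: ys_def nth_rotate rev_nth)
    ultimately have "take m ys = p" using aligned[OF l2(2) l2(1) dp lp mk m2] sub l2 x10 b \<open>l = k - 1\<close> by simp
    then show ?thesis using l2 by blast
  qed
qed

lemma k_cycles_alt: "C \<in> k_cycles V E k \<longleftrightarrow> (\<exists>xs. length xs = k \<and> distinct xs \<and> set xs \<subseteq> V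
      \<and> (\<forall>i<k. E (xs ! i) (xs ! ((i + 1) mod k))) \<and> C = cyc k xs)"
  unfolding k_cycles_def cyc_def by simp

lemma edgeE:
  assumes "\<forall>i<k. E (xs ! i) (xs ! ((i + 1) mod k))" "\<forall>u v. E u v \<longrightarrow> E v u" "{a, b} \<in> cyc k xs"
  shows "E a b"
proof -
  obtain l where l: "l < k" "{a, b} = {xs ! l, xs ! ((l + 1) mod k)}" using assms(3) unfolding cyc_def by blast
  then have "E (xs ! l) (xs ! ((l + 1) mod k))" using assms(1) by blast
  then show ?thesis using l(2) assms(2) unfolding doubleton_eq_iff by blast
qed

lemma finite_k_cycles: "finite V \<Longrightarrow> finite (k_cycles V E k)"
proof -
  assume fV: "finite V"
  have "k_cycles V E k \<subseteq> cyc k ` {xs. set xs \<subseteq> V \<and> length xs = k}"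
  proof
    fix C assume "C \<in> k_cycles V E k"
    then obtain xs where "length xs = k" "set xs \<subseteq> V" "C = cyc k xs" unfolding k_cycles_alt by blast
    then show "C \<in> cyc k ` {xs. set xs \<subseteq> V \<and> length xs = k}" by blast
  qed
  moreover have "finite (cyc k ` {xs. set xs \<subseteq> V \<and> length xs = k})"
    using finite_lists_length_eq[OF fV] by (rule finite_imageI)
  ultimately show ?thesis by (rule finite_subset)
qed

lemma finite_sp: "finite V \<Longrightarrow> finite (simple_paths V E m)"
proof -
  assume fV: "finite V"
  have "simple_paths V E m \<subseteq> {xs. set xs \<subseteq> V \<and> length xs = m}"
    unfolding simple_paths_def by auto
  then show ?thesis using finite_lists_length_eq[OF fV] by (rule finite_subset)
qed

lemma ct_bound:
  assumes sg: "simple_graph V E" and deg: "\<forall>u\<in>V. real (degree V E u) \<le> sqrt (real (card V))"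
    and k4: "k \<ge> 4" and pP: "p \<in> simple_paths V E (k - 2)"
  shows "real (cycles_through V E k p) \<le> real (card V)"
proof -
  have fV: "finite V" and sym: "\<forall>u v. E u v \<longrightarrow> E v u" using sg unfolding simple_graph_def by auto
  have lp: "length p = k - 2" and dp: "distinct p" and sp: "set p \<subseteq> V" using pP unfolding simple_paths_def by auto
  define Na where "Na = {a \<in> V. E (p ! (k - 3)) a}"
  define Nb where "Nb = {b \<in> V. E (p ! 0) b}"
  have "{C \<in> k_cycles V E k. path_edges p \<subseteq> C} \<subseteq> (\<lambda>(a, b). cyc k (p @ [a, b])) ` (Na \<times> Nb)"
  proof
    fix C assume "C \<in> {C \<in> k_cycles V E k. path_edges p \<subseteq> C}"
    then obtain xs where xs: "length xs = k" "distinct xs" "set xs \<subseteq> V"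
      "\<forall>i<k. E (xs ! i) (xs ! ((i + 1) mod k))" "C = cyc k xs" and sub: "path_edges p \<subseteq> C"
      unfolding k_cycles_alt by blast
    obtain ys where ys: "length ys = k" "distinct ys" "set ys = set xs" "cyc k ys = cyc k xs" "take (k - 2) ys = p"
    proof -
      have "\<exists>ys. length ys = k \<and> distinct ys \<and> set ys = set xs \<and> cyc k ys = cyc k xs \<and> take (k - 2) ys = p"
        using align[OF xs(2) xs(1) _ dp lp] k4 sub xs(5) by simp
      then show ?thesis using that by blast
    qed
    have yseq: "ys = p @ [ys ! (k - 2), ys ! (k - 1)]"
    proof (rule nth_equalityI)
      show "length ys = length (p @ [ys ! (k - 2), ys ! (k - 1)])" using ys lp k4 by simp
      fix i assume "i < length ys"
      then consider "i < k - 2" | "i = k - 2" | "i = k - 1" using ys(1) by linarith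
      then show "ys ! i = (p @ [ys ! (k - 2), ys ! (k - 1)]) ! i"
      proof cases
        case 1
        then have "take (k - 2) ys ! i = ys ! i" by (intro nth_take)
        then show ?thesis using ys(5) lp 1 by (simp add: nth_append)
      next
        case 2 then show ?thesis using lp by (simp add: nth_append)
      next
        case 3
        have "(p @ [ys ! (k - 2), ys ! (k - 1)]) ! (length p + 1) = ys ! (k - 1)" by (simp add: nth_append)
        moreover have "length p + 1 = k - 1" using lp k4 by simp
        ultimately show ?thesis using 3 by simp
      qed
    qed
    have "{ys ! (k - 3), ys ! ((k - 3 + 1) mod k)} \<in> cyc k ys" using k4 by (intro in_cyc) simp
    moreover have "(k - 3 + 1) mod k = k - 2" using k4 by simp
    ultimately have "E (ys ! (k - 3)) (ys ! (k - 2))" using edgeE[OF xs(4) sym] ys(4) by simp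
    moreover have "ys ! (k - 3) = p ! (k - 3)"
    proof -
      have "take (k - 2) ys ! (k - 3) = ys ! (k - 3)" using k4 by (intro nth_take) simp
      then show ?thesis using ys(5) by simp
    qed
    moreover have "ys ! (k - 2) \<in> V"
    proof -
      have "k - 2 < length ys" using ys(1) k4 by simp
      then have "ys ! (k - 2) \<in> set ys" by (rule nth_mem)
      then show ?thesis using ys(3) xs(3) by blast
    qed
    ultimately have a: "ys ! (k - 2) \<in> Na" unfolding Na_def by simp
    have "{ys ! (k - 1), ys ! ((k - 1 + 1) mod k)} \<in> cyc k ys" using k4 by (intro in_cyc) simp
    then have "E (ys ! (k - 1)) (ys ! 0)" using edgeE[OF xs(4) sym] ys(4) k4 by simp
    moreover have "ys ! 0 = p ! 0"
    proof -
      have "take (k - 2) ys ! 0 = ys ! 0" using k4 by (intro nth_take) simp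
      then show ?thesis using ys(5) by simp
    qed
    moreover have "ys ! (k - 1) \<in> V"
    proof -
      have "k - 1 < length ys" using ys(1) k4 by simp
      then have "ys ! (k - 1) \<in> set ys" by (rule nth_mem)
      then show ?thesis using ys(3) xs(3) by blast
    qed
    ultimately have b: "ys ! (k - 1) \<in> Nb" unfolding Nb_def using sym by simp
    have "C = cyc k (p @ [ys ! (k - 2), ys ! (k - 1)])" using ys(4) xs(5) yseq by simp
    then show "C \<in> (\<lambda>(a, b). cyc k (p @ [a, b])) ` (Na \<times> Nb)" using a b
      by (intro image_eqI[where x="(ys ! (k - 2), ys ! (k - 1))"]) auto
  qed
  then have "cycles_through V E k p \<le> card ((\<lambda>(a, b). cyc k (p @ [a, b])) ` (Na \<times> Nb))"
    unfolding cycles_through_def by (intro card_mono) (simp_all add: Na_def Nb_def fV)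
  also have "\<dots> \<le> card (Na \<times> Nb)" by (rule card_image_le) (simp_all add: Na_def Nb_def fV)
  also have "\<dots> = degree V E (p ! (k - 3)) * degree V E (p ! 0)"
    by (simp add: card_cartesian_product Na_def Nb_def degree_def)
  finally have "real (cycles_through V E k p) \<le> real (degree V E (p ! (k - 3))) * real (degree V E (p ! 0))"
    by (simp only: of_nat_mult[symmetric] of_nat_le_iff)
  also have "\<dots> \<le> sqrt (real (card V)) * sqrt (real (card V))"
  proof (intro mult_mono)
    have "k - 3 < length p" "0 < length p" using lp k4 by auto
    then have "p ! (k - 3) \<in> V" "p ! 0 \<in> V" using sp by (auto dest!: nth_mem)
    then show "real (degree V E (p ! (k - 3))) \<le> sqrt (real (card V))"
      "real (degree V E (p ! 0)) \<le> sqrt (real (card V))" using deg by auto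
  qed auto
  also have "\<dots> = real (card V)" by simp
  finally show ?thesis .
qed

lemma sp_count:
  assumes fV: "finite V" and D: "0 \<le> D" and deg: "\<forall>u\<in>V. real (degree V E u) \<le> D"
  shows "real (card (simple_paths V E (Suc m))) \<le> real (card V) * D ^ m"
proof (induction m)
  case 0
  have "simple_paths V E (Suc 0) \<subseteq> (\<lambda>v. [v]) ` V"
  proof
    fix p assume "p \<in> simple_paths V E (Suc 0)"
    then have "length p = 1" "set p \<subseteq> V" unfolding simple_paths_def by auto
    then obtain v where "p = [v]" "v \<in> V" by (auto simp: length_Suc_conv)
    then show "p \<in> (\<lambda>v. [v]) ` V" by blast
  qed
  then have "card (simple_paths V E (Suc 0)) \<le> card ((\<lambda>v. [v]) ` V)"
    using fV by (intro card_mono) auto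
  also have "\<dots> \<le> card V" by (rule card_image_le[OF fV])
  finally show ?case by simp
next
  case (Suc m)
  let ?S = "simple_paths V E (Suc m)"
  let ?T = "Sigma ?S (\<lambda>q. {v \<in> V. E (last q) v})"
  have fS: "finite ?S" using finite_sp[OF fV] .
  have "simple_paths V E (Suc (Suc m)) \<subseteq> (\<lambda>(q, v). q @ [v]) ` ?T"
  proof
    fix p assume "p \<in> simple_paths V E (Suc (Suc m))"
    then have lp: "length p = Suc (Suc m)" and dp: "distinct p" and sp: "set p \<subseteq> V"
      and ep: "\<forall>i. i + 1 < Suc (Suc m) \<longrightarrow> E (p ! i) (p ! (i + 1))"
      unfolding simple_paths_def by auto
    have pe: "p = butlast p @ [last p]" using lp by (metis append_butlast_last_id list.size(3) nat.distinct(1))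
    have "butlast p \<in> ?S"
      unfolding simple_paths_def
    proof (intro CollectI conjI allI impI)
      show "length (butlast p) = Suc m" using lp by simp
      show "distinct (butlast p)" using dp by (rule distinct_butlast)
      show "set (butlast p) \<subseteq> V" using sp by (meson in_set_butlastD subset_iff)
      fix i assume "i + 1 < Suc m"
      then show "E (butlast p ! i) (butlast p ! (i + 1))" using ep lp by (simp add: nth_butlast)
    qed
    moreover have "last p \<in> V" using sp lp by (metis last_in_set list.size(3) nat.distinct(1) subsetD)
    moreover have "E (last (butlast p)) (last p)"
    proof -
      have "length (butlast p) = Suc m" using lp by simp
      then have "butlast p \<noteq> []" by (metis list.size(3) nat.distinct(1))
        then have "last (butlast p) = butlast p ! m" using \<open>length (butlast p) = Suc m\<close> by (simp add: last_conv_nth)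
      then have "last (butlast p) = p ! m" using lp by (simp add: nth_butlast)
      moreover have "last p = p ! (m + 1)" using lp by (metis last_conv_nth list.size(3) nat.distinct(1) diff_Suc_1 Suc_eq_plus1)
      ultimately show ?thesis using ep by simp
    qed
    ultimately show "p \<in> (\<lambda>(q, v). q @ [v]) ` ?T" using pe
      by (intro image_eqI[where x="(butlast p, last p)"]) auto
  qed
  then have "card (simple_paths V E (Suc (Suc m))) \<le> card ((\<lambda>(q, v). q @ [v]) ` ?T)"
    using fS fV by (intro card_mono) auto
  also have "\<dots> \<le> card ?T" by (rule card_image_le) (use fS fV in auto)
  also have "\<dots> = (\<Sum>q\<in>?S. degree V E (last q))"
    using fS fV by (simp add: degree_def)
  finally have "real (card (simple_paths V E (Suc (Suc m)))) \<le> (\<Sum>q\<in>?S. real (degree V E (last q)))"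
    by (metis of_nat_le_iff of_nat_sum)
  also have "\<dots> \<le> (\<Sum>q\<in>?S. D)"
  proof (rule sum_mono)
    fix q assume "q \<in> ?S"
    then have "length q = Suc m" "set q \<subseteq> V" unfolding simple_paths_def by auto
    then have "last q \<in> V" by (metis last_in_set list.size(3) nat.distinct(1) subsetD)
    then show "real (degree V E (last q)) \<le> D" using deg by auto
  qed
  also have "\<dots> = real (card ?S) * D" by simp
  also have "\<dots> \<le> real (card V) * D ^ m * D" using Suc D by (rule mult_right_mono)
  finally show ?case by (simp add: algebra_simps)
qed

lemma cycle_has_path:
  assumes "C \<in> k_cycles V E k" "k \<ge> 4"
  shows "\<exists>p\<in>simple_paths V E (k - 2). path_edges p \<subseteq> C"
proof -
  obtain xs where xs: "length xs = k" "distinct xs" "set xs \<subseteq> V"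
      "\<forall>i<k. E (xs ! i) (xs ! ((i + 1) mod k))" "C = cyc k xs"
    using assms(1) unfolding k_cycles_alt by blast
  let ?p = "take (k - 2) xs"
  have "?p \<in> simple_paths V E (k - 2)"
    unfolding simple_paths_def
  proof (intro CollectI conjI allI impI)
    show "length ?p = k - 2" using xs(1) by simp
    show "distinct ?p" using xs(2) by simp
    show "set ?p \<subseteq> V" by (rule order_trans[OF set_take_subset xs(3)])
    fix i assume i: "i + 1 < k - 2"
    then have ik: "i + 1 < k" by simp
    then have "i < k" by simp
    then have "E (xs ! i) (xs ! ((i + 1) mod k))" using xs(4) by blast
    moreover have "(i + 1) mod k = i + 1" using ik by (rule mod_less)
    moreover have "?p ! i = xs ! i" "?p ! (i + 1) = xs ! (i + 1)" using i by simp_all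
    ultimately show "E (?p ! i) (?p ! (i + 1))" by simp
  qed
  moreover have "path_edges ?p \<subseteq> C"
  proof
    fix e assume "e \<in> path_edges ?p"
    then obtain i where i: "i + 1 < length ?p" "e = {?p ! i, ?p ! (i + 1)}" unfolding path_edges_def by blast
    have ik: "i + 1 < k" using i(1) xs(1) by simp
    then have "(i + 1) mod k = i + 1" by (rule mod_less)
    moreover have "?p ! i = xs ! i" "?p ! (i + 1) = xs ! (i + 1)" using i(1) by simp_all
    ultimately have "e = {xs ! i, xs ! ((i + 1) mod k)}" using i(2) by simp
    then show "e \<in> C" using xs(5) in_cyc[of i k xs] ik by simp
  qed
  ultimately show ?thesis by blast
qed

theorem lemma5p3:
  fixes V :: "'a set" and E :: "'a \<Rightarrow> 'a \<Rightarrow> bool" and k :: nat and \<gamma> :: real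
  assumes "k \<ge> 4"
    and "0 \<le> \<gamma>" and "\<gamma> < 1/2"
    and "simple_graph V E"
    and "\<forall>u\<in>V. real (degree V E u) \<le> sqrt (real (card V))"
    and "real (card (k_cycles V E k)) \<ge> real (card V) powr (real k / 2 + \<gamma>)"
  shows "real (card {p. dense_path V E k \<gamma> p}) \<ge> (1/2) * real (card V) powr (real k / 2 - 1 + \<gamma>)"
proof -
  note k4 = assms(1) and sg = assms(4) and deg = assms(5) and cyc_lb = assms(6)
  have fV: "finite V" using sg unfolding simple_graph_def by auto
  define n where "n = real (card V)"
  define P where "P = simple_paths V E (k - 2)"
  define K where "K = k_cycles V E k"
  define ct where "ct = cycles_through V E k"
  define thr where "thr = n powr (1/2 + \<gamma>) / 2"
  define Dn where "Dn = {p. dense_path V E k \<gamma> p}"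
  have fP: "finite P" unfolding P_def using finite_sp[OF fV] .
  have fK: "finite K" unfolding K_def using finite_k_cycles[OF fV] .
  have Dn_eq: "Dn = {p \<in> P. thr \<le> real (ct p)}"
    unfolding Dn_def dense_path_def P_def thr_def ct_def n_def by auto
  have n0: "0 \<le> n" unfolding n_def by simp
  show ?thesis
  proof (cases "n = 0")
    case True then show ?thesis unfolding n_def by simp
  next
    case False
    then have npos: "0 < n" using n0 by simp
    have ct_sum: "ct p = (\<Sum>C\<in>K. if path_edges p \<subseteq> C then 1 else 0)" for p
      unfolding ct_def cycles_through_def K_def[symmetric]
      by (simp only: card_eq_sum sum.inter_filter[OF fK])
    have "card K \<le> (\<Sum>C\<in>K. \<Sum>p\<in>P. (if path_edges p \<subseteq> C then 1 else 0::nat))"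
    proof -
      have "card K = (\<Sum>C\<in>K. (1::nat))" by simp
      also have "\<dots> \<le> (\<Sum>C\<in>K. \<Sum>p\<in>P. (if path_edges p \<subseteq> C then 1 else 0::nat))"
      proof (rule sum_mono)
        fix C assume "C \<in> K"
        then obtain p0 where p0: "p0 \<in> P" "path_edges p0 \<subseteq> C"
          using cycle_has_path[of C V E k] k4 unfolding K_def P_def by blast
        have "(1::nat) = (if path_edges p0 \<subseteq> C then 1 else 0)" using p0 by simp
        also have "\<dots> \<le> (\<Sum>p\<in>P. (if path_edges p \<subseteq> C then 1 else 0::nat))"
          by (rule member_le_sum[OF p0(1) _ fP]) simp
        finally show "1 \<le> (\<Sum>p\<in>P. (if path_edges p \<subseteq> C then 1 else 0::nat))" .
      qed
      finally show ?thesis .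
    qed
    also have "\<dots> = (\<Sum>p\<in>P. ct p)" unfolding ct_sum by (rule sum.swap)
    finally have cK: "real (card K) \<le> (\<Sum>p\<in>P. real (ct p))"
      by (metis of_nat_le_iff of_nat_sum)
    have split: "(\<Sum>p\<in>P. real (ct p)) = (\<Sum>p\<in>P - Dn. real (ct p)) + (\<Sum>p\<in>Dn. real (ct p))"
      using fP Dn_eq by (intro sum.subset_diff) auto
    have s1: "(\<Sum>p\<in>Dn. real (ct p)) \<le> real (card Dn) * n"
    proof -
      have "(\<Sum>p\<in>Dn. real (ct p)) \<le> (\<Sum>p\<in>Dn. n)"
      proof (rule sum_mono)
        fix p assume "p \<in> Dn"
        then have "p \<in> P" using Dn_eq by auto
        then show "real (ct p) \<le> n" unfolding ct_def n_def P_def using ct_bound[OF sg deg k4] by blast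
      qed
      then show ?thesis by simp
    qed
    have s2: "(\<Sum>p\<in>P - Dn. real (ct p)) \<le> real (card P) * thr"
    proof -
      have "(\<Sum>p\<in>P - Dn. real (ct p)) \<le> (\<Sum>p\<in>P - Dn. thr)"
        by (rule sum_mono) (auto simp: Dn_eq)
      also have "\<dots> = real (card (P - Dn)) * thr" by simp
      also have "\<dots> \<le> real (card P) * thr"
        using fP by (intro mult_right_mono) (auto simp: thr_def intro: card_mono)
      finally show ?thesis .
    qed
    have cP: "real (card P) \<le> n * sqrt n ^ (k - 3)"
    proof -
      have "k - 2 = Suc (k - 3)" using k4 by simp
      then show ?thesis unfolding P_def n_def using sp_count[OF fV _ deg, of "k - 3"] by simp
    qed
    have pw: "sqrt n ^ (k - 3) = n powr ((real k - 3) / 2)"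
    proof -
      have "sqrt n ^ (k - 3) = (n powr (1/2)) ^ (k - 3)" using n0 by (simp add: powr_half_sqrt)
      also have "\<dots> = n powr (real (k - 3) * (1/2))" using npos by (simp add: powr_realpow[symmetric] powr_powr)
      also have "real (k - 3) = real k - 3" using k4 by simp
      finally show ?thesis by simp
    qed
    have key: "n * n powr ((real k - 3) / 2) * thr = n powr (real k / 2 + \<gamma>) / 2"
    proof -
      have "n * n powr ((real k - 3) / 2) * n powr (1/2 + \<gamma>) = n powr (1 + (real k - 3) / 2 + (1/2 + \<gamma>))"
        using npos by (simp only: powr_add powr_one_gt_zero_iff powr_one)
      also have "1 + (real k - 3) / 2 + (1/2 + \<gamma>) = real k / 2 + \<gamma>" by (simp add: field_simps)
      finally show ?thesis unfolding thr_def by simp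
    qed
    have thr0: "0 \<le> thr" unfolding thr_def by simp
    have "real (card P) * thr \<le> n powr (real k / 2 + \<gamma>) / 2"
      using mult_right_mono[OF cP thr0] pw key by simp
    then have "n powr (real k / 2 + \<gamma>) \<le> n powr (real k / 2 + \<gamma>) / 2 + real (card Dn) * n"
      using cyc_lb cK split s1 s2 unfolding K_def n_def by linarith
    then have A: "n powr (real k / 2 + \<gamma>) / 2 \<le> real (card Dn) * n" by linarith
    have "n powr (real k / 2 + \<gamma>) = n powr (real k / 2 - 1 + \<gamma>) * n"
    proof -
      have "n powr (real k / 2 - 1 + \<gamma>) * n = n powr (real k / 2 - 1 + \<gamma>) * n powr 1" using npos by simp
      also have "\<dots> = n powr (real k / 2 - 1 + \<gamma> + 1)" by (simp only: powr_add)
      finally show ?thesis by simp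
    qed
    then have "(1/2) * n powr (real k / 2 - 1 + \<gamma>) * n \<le> real (card Dn) * n" using A by simp
    then have "(1/2) * n powr (real k / 2 - 1 + \<gamma>) \<le> real (card Dn)" using npos by simp
    then show ?thesis unfolding Dn_def n_def .
  qed
qed

end
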